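(* Let $S=(N,M_0)$ be a live H1S system. Then $S$ is reversible if and only if $S$ enables a T-sequence.
   Context: A Petri net is $N=(P,T,W)$ with finite disjoint sets $P$, $T$ and weights $W:(P\times T)\cup(T\times P)\to\mathbb{N}$; incidence matrix $I(p,t)=W(t,p)-W(p,t)$. Transition $t$ is enabled at $M$ if $M(p)\ge W(p,t)$ for all $p$; firing yields $M+I[\cdot,t]$. A system is live if for every transition $t$ and every reachable marking $M'$ some marking reachable from $M'$ enables $t$; it is reversible if $M_0$ is reachable from every marking reachable from $M_0$. A place is shared if it has at least two output transitions; an H1S net is a homogeneous net (for each place, all its output arc weights are equal) with at most one shared place. A T-sequence of $S$ is a firing sequence $\sigma$ feasible from $M_0$ containing every transition of $T$ and such that $I\cdot\mathbf{P}(\sigma)=0$, where $\mathbf{P}(\sigma)$ is its Parikh vector. *)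

theory Defs
  imports Main
begin

text \<open>A Petri net N = (P, T, W) is given by finite disjoint carrier sets P, T (disjoint
  automatically, being of different types) and weights split into
  Wpre p t = W(p,t) and Wpost t p = W(t,p). Markings are functions 'p => nat; only
  their values on P are affected by firing.\<close>

definition petri_net :: "'p set \<Rightarrow> 't set \<Rightarrow> bool" where
  "petri_net P T \<longleftrightarrow> finite P \<and> finite T"

definition incidence :: "('p \<Rightarrow> 't \<Rightarrow> nat) \<Rightarrow> ('t \<Rightarrow> 'p \<Rightarrow> nat) \<Rightarrow> 'p \<Rightarrow> 't \<Rightarrow> int" where
  "incidence Wpre Wpost p t = int (Wpost t p) - int (Wpre p t)"

definition enabled :: "'p set \<Rightarrow> ('p \<Rightarrow> 't \<Rightarrow> nat) \<Rightarrow> ('p \<Rightarrow> nat) \<Rightarrow> 't \<Rightarrow> bool" where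
  "enabled P Wpre M t \<longleftrightarrow> (\<forall>p\<in>P. M p \<ge> Wpre p t)"

definition fire :: "'p set \<Rightarrow> ('p \<Rightarrow> 't \<Rightarrow> nat) \<Rightarrow> ('t \<Rightarrow> 'p \<Rightarrow> nat) \<Rightarrow> ('p \<Rightarrow> nat) \<Rightarrow> 't \<Rightarrow> ('p \<Rightarrow> nat)" where
  "fire P Wpre Wpost M t = (\<lambda>p. if p \<in> P then M p - Wpre p t + Wpost t p else M p)"

fun fire_seq :: "'p set \<Rightarrow> 't set \<Rightarrow> ('p \<Rightarrow> 't \<Rightarrow> nat) \<Rightarrow> ('t \<Rightarrow> 'p \<Rightarrow> nat)
    \<Rightarrow> ('p \<Rightarrow> nat) \<Rightarrow> 't list \<Rightarrow> ('p \<Rightarrow> nat) option" where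
  "fire_seq P T Wpre Wpost M [] = Some M"
| "fire_seq P T Wpre Wpost M (t # \<sigma>) =
     (if t \<in> T \<and> enabled P Wpre M t
      then fire_seq P T Wpre Wpost (fire P Wpre Wpost M t) \<sigma> else None)"

definition reachable :: "'p set \<Rightarrow> 't set \<Rightarrow> ('p \<Rightarrow> 't \<Rightarrow> nat) \<Rightarrow> ('t \<Rightarrow> 'p \<Rightarrow> nat)
    \<Rightarrow> ('p \<Rightarrow> nat) \<Rightarrow> ('p \<Rightarrow> nat) \<Rightarrow> bool" where
  "reachable P T Wpre Wpost M M' \<longleftrightarrow> (\<exists>\<sigma>. fire_seq P T Wpre Wpost M \<sigma> = Some M')"

definition live :: "'p set \<Rightarrow> 't set \<Rightarrow> ('p \<Rightarrow> 't \<Rightarrow> nat) \<Rightarrow> ('t \<Rightarrow> 'p \<Rightarrow> nat)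
    \<Rightarrow> ('p \<Rightarrow> nat) \<Rightarrow> bool" where
  "live P T Wpre Wpost M0 \<longleftrightarrow>
     (\<forall>t\<in>T. \<forall>M'. reachable P T Wpre Wpost M0 M' \<longrightarrow>
        (\<exists>M''. reachable P T Wpre Wpost M' M'' \<and> enabled P Wpre M'' t))"

definition reversible :: "'p set \<Rightarrow> 't set \<Rightarrow> ('p \<Rightarrow> 't \<Rightarrow> nat) \<Rightarrow> ('t \<Rightarrow> 'p \<Rightarrow> nat)
    \<Rightarrow> ('p \<Rightarrow> nat) \<Rightarrow> bool" where
  "reversible P T Wpre Wpost M0 \<longleftrightarrow>
     (\<forall>M'. reachable P T Wpre Wpost M0 M' \<longrightarrow> reachable P T Wpre Wpost M' M0)"

definition output_transitions :: "'t set \<Rightarrow> ('p \<Rightarrow> 't \<Rightarrow> nat) \<Rightarrow> 'p \<Rightarrow> 't set" where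
  "output_transitions T Wpre p = {t \<in> T. Wpre p t > 0}"

definition shared_place :: "'t set \<Rightarrow> ('p \<Rightarrow> 't \<Rightarrow> nat) \<Rightarrow> 'p \<Rightarrow> bool" where
  "shared_place T Wpre p \<longleftrightarrow> card (output_transitions T Wpre p) \<ge> 2"

definition homogeneous :: "'p set \<Rightarrow> 't set \<Rightarrow> ('p \<Rightarrow> 't \<Rightarrow> nat) \<Rightarrow> bool" where
  "homogeneous P T Wpre \<longleftrightarrow>
     (\<forall>p\<in>P. \<forall>t1\<in>output_transitions T Wpre p. \<forall>t2\<in>output_transitions T Wpre p.
        Wpre p t1 = Wpre p t2)"

definition H1S :: "'p set \<Rightarrow> 't set \<Rightarrow> ('p \<Rightarrow> 't \<Rightarrow> nat) \<Rightarrow> bool" where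
  "H1S P T Wpre \<longleftrightarrow> homogeneous P T Wpre \<and> card {p \<in> P. shared_place T Wpre p} \<le> 1"

definition parikh :: "'t list \<Rightarrow> 't \<Rightarrow> nat" where
  "parikh \<sigma> t = count_list \<sigma> t"

definition T_sequence :: "'p set \<Rightarrow> 't set \<Rightarrow> ('p \<Rightarrow> 't \<Rightarrow> nat) \<Rightarrow> ('t \<Rightarrow> 'p \<Rightarrow> nat)
    \<Rightarrow> ('p \<Rightarrow> nat) \<Rightarrow> 't list \<Rightarrow> bool" where
  "T_sequence P T Wpre Wpost M0 \<sigma> \<longleftrightarrow>
     fire_seq P T Wpre Wpost M0 \<sigma> \<noteq> None \<and> T \<subseteq> set \<sigma> \<and>
     (\<forall>p\<in>P. (\<Sum>t\<in>T. incidence Wpre Wpost p t * int (parikh \<sigma> t)) = 0)"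

definition enables_T_sequence :: "'p set \<Rightarrow> 't set \<Rightarrow> ('p \<Rightarrow> 't \<Rightarrow> nat) \<Rightarrow> ('t \<Rightarrow> 'p \<Rightarrow> nat)
    \<Rightarrow> ('p \<Rightarrow> nat) \<Rightarrow> bool" where
  "enables_T_sequence P T Wpre Wpost M0 \<longleftrightarrow> (\<exists>\<sigma>. T_sequence P T Wpre Wpost M0 \<sigma>)"

end

theory Submission
  imports Defs
begin

definition eqv :: "'p set \<Rightarrow> 't set \<Rightarrow> ('p \<Rightarrow> 't \<Rightarrow> nat) \<Rightarrow> ('t \<Rightarrow> 'p \<Rightarrow> nat)
    \<Rightarrow> ('p \<Rightarrow> nat) \<Rightarrow> ('p \<Rightarrow> nat) \<Rightarrow> ('t \<Rightarrow> nat) \<Rightarrow> bool" where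
  "eqv P T Wpre Wpost L K Z \<longleftrightarrow>
     (\<forall>p\<in>P. int (L p) = int (K p) + (\<Sum>t\<in>T. incidence Wpre Wpost p t * int (Z t))) \<and>
     (\<forall>p. p \<notin> P \<longrightarrow> L p = K p)"

definition consumers :: "'p set \<Rightarrow> 't set \<Rightarrow> ('p \<Rightarrow> 't \<Rightarrow> nat) \<Rightarrow> 't set" where
  "consumers P T Wpre = {t\<in>T. \<exists>p\<in>P. shared_place T Wpre p \<and> 0 < Wpre p t}"

lemma fire_seq_append:
  "fire_seq P T Wpre Wpost M (a @ b) = (case fire_seq P T Wpre Wpost M a of None \<Rightarrow> None
     | Some M' \<Rightarrow> fire_seq P T Wpre Wpost M' b)"
  by (induction a arbitrary: M) auto

lemma fire_seq_appendI:
  "fire_seq P T Wpre Wpost M a = Some M1 \<Longrightarrow> fire_seq P T Wpre Wpost M1 b = Some M2 \<Longrightarrow>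
   fire_seq P T Wpre Wpost M (a @ b) = Some M2"
  by (simp add: fire_seq_append)

lemma fire_seq_appendE:
  assumes "fire_seq P T Wpre Wpost M (a @ b) = Some M2"
  obtains M1 where "fire_seq P T Wpre Wpost M a = Some M1" "fire_seq P T Wpre Wpost M1 b = Some M2"
  using assms by (auto simp: fire_seq_append split: option.splits)

lemma reachable_trans:
  "reachable P T Wpre Wpost M1 M2 \<Longrightarrow> reachable P T Wpre Wpost M2 M3 \<Longrightarrow>
   reachable P T Wpre Wpost M1 M3"
  unfolding reachable_def by (meson fire_seq_appendI)

lemma reachable_refl: "reachable P T Wpre Wpost M M"
  unfolding reachable_def by (metis fire_seq.simps(1))

lemma sum_unit:
  assumes "finite T" "t \<in> T"
  shows "(\<Sum>u\<in>T. f u * int (Z u + (if t = u then 1 else 0))) = (\<Sum>u\<in>T. f u * int (Z u)) + (f t :: int)"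
proof -
  have "(\<Sum>u\<in>T. f u * int (Z u + (if t = u then 1 else 0))) =
        (\<Sum>u\<in>T. f u * int (Z u) + (if t = u then f u else 0))"
    by (rule sum.cong) (auto simp: algebra_simps)
  also have "\<dots> = (\<Sum>u\<in>T. f u * int (Z u)) + (\<Sum>u\<in>T. (if t = u then f u else 0))"
    by (simp add: sum.distrib)
  also have "(\<Sum>u\<in>T. (if t = u then f u else 0)) = f t"
    using assms by (simp add: sum.delta)
  finally show ?thesis .
qed

lemma count_single: "count_list [t] u = (if t = u then 1 else 0)"
  by simp

lemma eqv_fire:
  assumes "finite T" "t \<in> T" "enabled P Wpre M t"
  shows "eqv P T Wpre Wpost (fire P Wpre Wpost M t) M (count_list [t])"
proof -
  have "(\<Sum>u\<in>T. incidence Wpre Wpost p u * int (count_list [t] u)) = incidence Wpre Wpost p t" for p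
  proof -
    have "(\<Sum>u\<in>T. incidence Wpre Wpost p u * int (count_list [t] u)) =
          (\<Sum>u\<in>T. if t = u then incidence Wpre Wpost p u else 0)"
      by (rule sum.cong) (auto simp: count_single)
    then show ?thesis using assms(1,2) by (simp add: sum.delta)
  qed
  moreover have "p \<in> P \<Longrightarrow> int (fire P Wpre Wpost M t p) = int (M p) + incidence Wpre Wpost p t" for p
    using assms(3) unfolding enabled_def fire_def incidence_def by auto
  ultimately show ?thesis unfolding eqv_def fire_def by auto
qed

lemma eqv_combine:
  assumes "eqv P T Wpre Wpost A B X" "eqv P T Wpre Wpost B K Y"
  shows "eqv P T Wpre Wpost A K (\<lambda>u. Y u + X u)"
  using assms unfolding eqv_def by (auto simp: algebra_simps sum.distrib)

lemma eqv_cancel: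
  assumes "eqv P T Wpre Wpost A K Z" "eqv P T Wpre Wpost B K Y" "\<forall>u. Z u = X u + Y u"
  shows "eqv P T Wpre Wpost A B X"
proof -
  have "(\<Sum>t\<in>T. incidence Wpre Wpost p t * int (Z t)) =
        (\<Sum>t\<in>T. incidence Wpre Wpost p t * int (X t)) + (\<Sum>t\<in>T. incidence Wpre Wpost p t * int (Y t))" for p
    using assms(3) by (simp add: algebra_simps sum.distrib)
  then show ?thesis using assms unfolding eqv_def by auto
qed

lemma eqv_refl: "eqv P T Wpre Wpost M M (\<lambda>_. 0)"
  unfolding eqv_def by simp

lemma fire_seq_eqv:
  assumes "finite T"
  shows "fire_seq P T Wpre Wpost M \<sigma> = Some M' \<Longrightarrow>
    eqv P T Wpre Wpost M' M (count_list \<sigma>) \<and> set \<sigma> \<subseteq> T"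
proof (induction \<sigma> arbitrary: M)
  case Nil
  then show ?case using eqv_refl[of P T Wpre Wpost M] by simp
next
  case (Cons t \<sigma>)
  then have t: "t \<in> T" "enabled P Wpre M t" and f: "fire_seq P T Wpre Wpost (fire P Wpre Wpost M t) \<sigma> = Some M'"
    by (auto split: if_splits)
  from Cons.IH[OF f] have ih: "eqv P T Wpre Wpost M' (fire P Wpre Wpost M t) (count_list \<sigma>)" "set \<sigma> \<subseteq> T"
    by auto
  have "eqv P T Wpre Wpost M' M (\<lambda>u. count_list [t] u + count_list \<sigma> u)"
    by (rule eqv_combine[OF ih(1) eqv_fire[OF assms t]])
  moreover have "(\<lambda>u. count_list [t] u + count_list \<sigma> u) = count_list (t # \<sigma>)"
  proof
    fix u show "count_list [t] u + count_list \<sigma> u = count_list (t # \<sigma>) u"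
      by (simp add: count_single)
  qed
  ultimately have "eqv P T Wpre Wpost M' M (count_list (t # \<sigma>))" by metis
  then show ?case using ih t by (simp del: count_list.simps)
qed

lemma eqv_zero:
  assumes "eqv P T Wpre Wpost L K Z" "\<forall>t\<in>T. Z t = 0"
  shows "L = K"
proof
  fix p show "L p = K p"
    using assms unfolding eqv_def by (cases "p \<in> P") auto
qed


context
  fixes P :: "'p set" and T :: "'t set" and Wpre :: "'p \<Rightarrow> 't \<Rightarrow> nat"
    and Wpost :: "'t \<Rightarrow> 'p \<Rightarrow> nat" and M0 :: "'p \<Rightarrow> nat"
  assumes finP: "finite P" and finT: "finite T" and h1s: "H1S P T Wpre"
    and lv: "live P T Wpre Wpost M0"
begin

lemma private_place:
  assumes "p \<in> P" "\<not> shared_place T Wpre p" "v \<in> T" "0 < Wpre p v" "u \<in> T" "0 < Wpre p u"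
  shows "u = v"
proof (rule ccontr)
  assume uv: "u \<noteq> v"
  have "{u,v} \<subseteq> output_transitions T Wpre p" using assms unfolding output_transitions_def by auto
  moreover have "finite (output_transitions T Wpre p)" using finT unfolding output_transitions_def by auto
  ultimately have "card {u,v} \<le> card (output_transitions T Wpre p)" by (simp add: card_mono)
  with uv have "2 \<le> card (output_transitions T Wpre p)" by simp
  thus False using assms(2) unfolding shared_place_def by simp
qed

lemma shared_unique:
  assumes "p \<in> P" "q \<in> P" "shared_place T Wpre p" "shared_place T Wpre q"
  shows "p = q"
proof -
  have fin: "finite {p\<in>P. shared_place T Wpre p}" using finP by simp
  have "card {p\<in>P. shared_place T Wpre p} \<le> Suc 0" using h1s unfolding H1S_def by simp
  then show ?thesis using card_le_Suc0_iff_eq[OF fin] assms by blast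
qed

lemma homog:
  assumes "p \<in> P" "c \<in> T" "v \<in> T" "0 < Wpre p c" "0 < Wpre p v"
  shows "Wpre p c = Wpre p v"
  using h1s assms unfolding H1S_def homogeneous_def output_transitions_def by blast

lemma transfer:
  assumes "eqv P T Wpre Wpost L K Z" "p \<in> P" "\<forall>u\<in>T. 0 < Z u \<longrightarrow> Wpre p u = 0"
  shows "K p \<le> L p"
proof -
  have "0 \<le> (\<Sum>t\<in>T. incidence Wpre Wpost p t * int (Z t))"
  proof (rule sum_nonneg)
    fix t assume t: "t \<in> T"
    show "0 \<le> incidence Wpre Wpost p t * int (Z t)"
    proof (cases "Z t = 0")
      case True then show ?thesis by simp
    next
      case False
      then have "Wpre p t = 0" using assms(3) t by auto
      then show ?thesis by (simp add: incidence_def)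
    qed
  qed
  then show ?thesis using assms(1,2) unfolding eqv_def by auto
qed

lemma private_transfer:
  assumes "eqv P T Wpre Wpost L K Z" "p \<in> P" "\<not> shared_place T Wpre p" "v \<in> T"
    "0 < Wpre p v" "Z v = 0"
  shows "K p \<le> L p"
proof (rule transfer[OF assms(1,2)])
  show "\<forall>u\<in>T. 0 < Z u \<longrightarrow> Wpre p u = 0"
  proof (intro ballI impI)
    fix u assume u: "u \<in> T" "0 < Z u"
    show "Wpre p u = 0"
    proof (rule ccontr)
      assume "Wpre p u \<noteq> 0"
      then have "u = v" using private_place[OF assms(2,3,4,5) u(1)] by simp
      then show False using u assms(6) by simp
    qed
  qed
qed

lemma conflict:
  assumes "v \<in> T" "enabled P Wpre K v" "Z v = 0" "eqv P T Wpre Wpost L K Z"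
    "reachable P T Wpre Wpost M0 L"
  shows "\<exists>\<eta> L'. fire_seq P T Wpre Wpost L \<eta> = Some L' \<and> (\<forall>u\<in>set \<eta>. u \<notin> consumers P T Wpre)
    \<and> enabled P Wpre L' v \<and> ((\<forall>t\<in>consumers P T Wpre. Z t = 0) \<longrightarrow> \<eta> = [])"
proof -
  let ?C = "consumers P T Wpre"
  have zc: "enabled P Wpre L v" if zc0: "\<forall>t\<in>?C. Z t = 0"
    unfolding enabled_def
  proof
    fix p assume p: "p \<in> P"
    show "Wpre p v \<le> L p"
    proof (cases "Wpre p v = 0")
      case True thus ?thesis by simp
    next
      case False
      have "K p \<le> L p"
      proof (cases "shared_place T Wpre p")
        case True
        have "\<forall>u\<in>T. 0 < Z u \<longrightarrow> Wpre p u = 0"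
          using zc0 True p unfolding consumers_def by auto
        then show ?thesis using transfer[OF assms(4) p] by blast
      next
        case False
        then show ?thesis using private_transfer[OF assms(4) p False assms(1) _ assms(3)] \<open>Wpre p v \<noteq> 0\<close>
          by simp
      qed
      moreover have "Wpre p v \<le> K p" using assms(2) p unfolding enabled_def by auto
      ultimately show ?thesis by simp
    qed
  qed
  show ?thesis
  proof (cases "enabled P Wpre L v")
    case True
    then show ?thesis by (intro exI[of _ "[]"] exI[of _ L]) auto
  next
    case notEn: False
    then obtain p where p: "p \<in> P" "L p < Wpre p v" unfolding enabled_def by (auto simp: not_le)
    have Kp: "Wpre p v \<le> K p" using assms(2) p unfolding enabled_def by auto
    have pv: "0 < Wpre p v" using p by simp
    have shp: "shared_place T Wpre p"
    proof (rule ccontr)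
      assume "\<not> shared_place T Wpre p"
      then have "K p \<le> L p" using private_transfer[OF assms(4) p(1) _ assms(1) pv assms(3)] by blast
      thus False using p Kp by simp
    qed
    have vC: "v \<in> ?C" using shp p pv assms(1) unfolding consumers_def by auto
    obtain M'' where M'': "reachable P T Wpre Wpost L M''" "enabled P Wpre M'' v"
      using lv assms(1,5) unfolding live_def by blast
    then obtain \<xi> where xi: "fire_seq P T Wpre Wpost L \<xi> = Some M''" unfolding reachable_def by blast
    define \<eta> where "\<eta> = takeWhile (\<lambda>u. u \<notin> ?C) \<xi>"
    define rest where "rest = dropWhile (\<lambda>u. u \<notin> ?C) \<xi>"
    have "\<xi> = \<eta> @ rest" unfolding \<eta>_def rest_def by simp
    with xi obtain L' where L': "fire_seq P T Wpre Wpost L \<eta> = Some L'"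
      "fire_seq P T Wpre Wpost L' rest = Some M''" by (metis fire_seq_appendE)
    have etaC: "\<forall>u\<in>set \<eta>. u \<notin> ?C" unfolding \<eta>_def by (auto dest: set_takeWhileD)
    have "enabled P Wpre L' v"
    proof (cases rest)
      case Nil then show ?thesis using L' M''(2) by simp
    next
      case (Cons c rest')
      have cC: "c \<in> ?C" using Cons unfolding rest_def
        by (metis hd_dropWhile list.distinct(1) list.sel(1))
      have cen: "enabled P Wpre L' c" using L'(2) Cons by (auto split: if_splits)
      have eq': "eqv P T Wpre Wpost L' K (\<lambda>u. Z u + count_list \<eta> u)"
        using eqv_combine[OF conjunct1[OF fire_seq_eqv[OF finT L'(1)]] assms(4)] .
      have ve: "Z v + count_list \<eta> v = 0" using assms(3) etaC vC by auto
      show ?thesis unfolding enabled_def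
      proof
        fix q assume q: "q \<in> P"
        show "Wpre q v \<le> L' q"
        proof (cases "Wpre q v = 0")
          case True then show ?thesis by simp
        next
          case False
          show ?thesis
          proof (cases "shared_place T Wpre q")
            case True
            then have qp: "q = p" using shared_unique q p(1) shp by blast
            from cC obtain q' where q': "q' \<in> P" "shared_place T Wpre q'" "0 < Wpre q' c" "c \<in> T"
              unfolding consumers_def by auto
            then have "q' = p" using shared_unique p(1) shp by blast
            then have "Wpre p c = Wpre p v" using homog q' pv assms(1) p(1) by auto
            then show ?thesis using cen qp p(1) unfolding enabled_def by auto
          next
            case nsh: False
            have "K q \<le> L' q"
              using private_transfer[OF eq' q nsh assms(1)] False ve by simp
            then show ?thesis using assms(2) q unfolding enabled_def by (meson le_trans)
          qed
        qed
      qed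
    qed
    moreover have "\<not> (\<forall>t\<in>?C. Z t = 0)" using zc notEn by blast
    ultimately show ?thesis using L' etaC by blast
  qed
qed

lemma pass:
  "fire_seq P T Wpre Wpost K \<alpha> = Some K2 \<Longrightarrow> reachable P T Wpre Wpost M0 L \<Longrightarrow>
   eqv P T Wpre Wpost L K Z \<Longrightarrow>
   \<exists>L2 Z2. reachable P T Wpre Wpost L L2 \<and> reachable P T Wpre Wpost M0 L2 \<and>
     eqv P T Wpre Wpost L2 K2 Z2 \<and>
     (\<forall>t\<in>consumers P T Wpre. Z2 t \<le> Z t) \<and>
     (\<forall>t\<in>consumers P T Wpre. t \<in> set \<alpha> \<longrightarrow> 0 < Z t \<longrightarrow> Z2 t < Z t) \<and>
     ((\<forall>t\<in>consumers P T Wpre. Z t = 0) \<longrightarrow>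
        (\<forall>t. Z2 t \<le> Z t) \<and> (\<forall>t. t \<in> set \<alpha> \<longrightarrow> 0 < Z t \<longrightarrow> Z2 t < Z t))"
proof (induction \<alpha> arbitrary: K L Z)
  case Nil
  then show ?case using reachable_refl[of P T Wpre Wpost L]
    by (intro exI[of _ L] exI[of _ Z]) auto
next
  case (Cons v \<alpha>)
  let ?C = "consumers P T Wpre"
  from Cons.prems(1) have v: "v \<in> T" "enabled P Wpre K v"
    and f: "fire_seq P T Wpre Wpost (fire P Wpre Wpost K v) \<alpha> = Some K2"
    by (auto split: if_splits)
  define K' where "K' = fire P Wpre Wpost K v"
  have eK: "eqv P T Wpre Wpost K' K (count_list [v])" unfolding K'_def by (rule eqv_fire[OF finT v])
  show ?case
  proof (cases "0 < Z v")
    case True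
    define Z' where "Z' = Z(v := Z v - 1)"
    have "\<forall>u. Z u = Z' u + count_list [v] u" using True unfolding Z'_def by (auto simp: count_single)
    then have e: "eqv P T Wpre Wpost L K' Z'" using eqv_cancel[OF Cons.prems(3) eK] by blast
    from Cons.IH[OF f[folded K'_def] Cons.prems(2) e] obtain L2 Z2 where ih:
      "reachable P T Wpre Wpost L L2" "reachable P T Wpre Wpost M0 L2" "eqv P T Wpre Wpost L2 K2 Z2"
      "\<forall>t\<in>?C. Z2 t \<le> Z' t" "\<forall>t\<in>?C. t \<in> set \<alpha> \<longrightarrow> 0 < Z' t \<longrightarrow> Z2 t < Z' t"
      "(\<forall>t\<in>?C. Z' t = 0) \<longrightarrow> (\<forall>t. Z2 t \<le> Z' t) \<and> (\<forall>t. t \<in> set \<alpha> \<longrightarrow> 0 < Z' t \<longrightarrow> Z2 t < Z' t)"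
      by blast
    have Z'le: "\<forall>t. Z' t \<le> Z t" unfolding Z'_def by auto
    have Z'eq: "\<forall>t. t \<noteq> v \<longrightarrow> Z' t = Z t" unfolding Z'_def by auto
    have Z'v: "Z' v < Z v" unfolding Z'_def using True by auto
    show ?thesis
    proof (intro exI[of _ L2] exI[of _ Z2] conjI)
      show "\<forall>t\<in>?C. Z2 t \<le> Z t" using ih(4) Z'le le_trans by blast
      show "\<forall>t\<in>?C. t \<in> set (v # \<alpha>) \<longrightarrow> 0 < Z t \<longrightarrow> Z2 t < Z t"
        using ih(4,5) Z'le Z'eq Z'v by (metis le_less_trans set_ConsD)
      show "(\<forall>t\<in>?C. Z t = 0) \<longrightarrow> (\<forall>t. Z2 t \<le> Z t) \<and> (\<forall>t. t \<in> set (v # \<alpha>) \<longrightarrow> 0 < Z t \<longrightarrow> Z2 t < Z t)"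
      proof
        assume a: "\<forall>t\<in>?C. Z t = 0"
        then have "\<forall>t\<in>?C. Z' t = 0" using Z'le by (metis le_zero_eq)
        then have h: "\<forall>t. Z2 t \<le> Z' t" "\<forall>t. t \<in> set \<alpha> \<longrightarrow> 0 < Z' t \<longrightarrow> Z2 t < Z' t" using ih(6) by auto
        show "(\<forall>t. Z2 t \<le> Z t) \<and> (\<forall>t. t \<in> set (v # \<alpha>) \<longrightarrow> 0 < Z t \<longrightarrow> Z2 t < Z t)"
          using h Z'le Z'eq Z'v by (metis le_less_trans le_trans set_ConsD)
      qed
    qed (use ih in auto)
  next
    case False
    then have Zv: "Z v = 0" by simp
    from conflict[OF v Zv Cons.prems(3) Cons.prems(2)] obtain \<eta> L' where c:
      "fire_seq P T Wpre Wpost L \<eta> = Some L'" "\<forall>u\<in>set \<eta>. u \<notin> ?C" "enabled P Wpre L' v"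
      "(\<forall>t\<in>?C. Z t = 0) \<longrightarrow> \<eta> = []"
      by blast
    define L'' where "L'' = fire P Wpre Wpost L' v"
    have fL: "fire_seq P T Wpre Wpost L (\<eta> @ [v]) = Some L''"
      using c v(1) by (auto intro!: fire_seq_appendI simp: L''_def)
    have rL: "reachable P T Wpre Wpost L L''" using fL reachable_def by blast
    have rM: "reachable P T Wpre Wpost M0 L''" using reachable_trans Cons.prems(2) rL by blast
    have e1: "eqv P T Wpre Wpost L'' K (\<lambda>u. Z u + count_list (\<eta> @ [v]) u)"
      using eqv_combine[OF conjunct1[OF fire_seq_eqv[OF finT fL]] Cons.prems(3)] .
    define Z' where "Z' = (\<lambda>u. Z u + count_list \<eta> u)"
    have "\<forall>u. Z u + count_list (\<eta> @ [v]) u = Z' u + count_list [v] u" unfolding Z'_def by simp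
    then have e: "eqv P T Wpre Wpost L'' K' Z'" using eqv_cancel[OF e1 eK] by blast
    from Cons.IH[OF f[folded K'_def] rM e] obtain L2 Z2 where ih:
      "reachable P T Wpre Wpost L'' L2" "reachable P T Wpre Wpost M0 L2" "eqv P T Wpre Wpost L2 K2 Z2"
      "\<forall>t\<in>?C. Z2 t \<le> Z' t" "\<forall>t\<in>?C. t \<in> set \<alpha> \<longrightarrow> 0 < Z' t \<longrightarrow> Z2 t < Z' t"
      "(\<forall>t\<in>?C. Z' t = 0) \<longrightarrow> (\<forall>t. Z2 t \<le> Z' t) \<and> (\<forall>t. t \<in> set \<alpha> \<longrightarrow> 0 < Z' t \<longrightarrow> Z2 t < Z' t)"
      by blast
    have ZC: "\<forall>t\<in>?C. Z' t = Z t" using c(2) unfolding Z'_def by auto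
    have Z0: "(\<forall>t\<in>?C. Z t = 0) \<Longrightarrow> Z' = Z" using c(4) unfolding Z'_def by auto
    show ?thesis
    proof (intro exI[of _ L2] exI[of _ Z2] conjI)
      show "reachable P T Wpre Wpost L L2" using rL ih(1) reachable_trans by blast
      show "\<forall>t\<in>?C. Z2 t \<le> Z t" using ih(4) ZC by simp
      show "\<forall>t\<in>?C. t \<in> set (v # \<alpha>) \<longrightarrow> 0 < Z t \<longrightarrow> Z2 t < Z t"
        using ih(5) ZC Zv by auto
      show "(\<forall>t\<in>?C. Z t = 0) \<longrightarrow> (\<forall>t. Z2 t \<le> Z t) \<and> (\<forall>t. t \<in> set (v # \<alpha>) \<longrightarrow> 0 < Z t \<longrightarrow> Z2 t < Z t)"
      proof
        assume a: "\<forall>t\<in>?C. Z t = 0"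
        then have "Z' = Z" by (rule Z0)
        then show "(\<forall>t. Z2 t \<le> Z t) \<and> (\<forall>t. t \<in> set (v # \<alpha>) \<longrightarrow> 0 < Z t \<longrightarrow> Z2 t < Z t)"
          using ih(6) a Zv by auto
      qed
    qed (use ih in auto)
  qed
qed

lemma phase2:
  assumes cyc: "fire_seq P T Wpre Wpost M0 \<sigma> = Some M0" "T \<subseteq> set \<sigma>"
  shows "\<forall>t\<in>consumers P T Wpre. Z t = 0 \<Longrightarrow> reachable P T Wpre Wpost M0 L \<Longrightarrow>
    eqv P T Wpre Wpost L M0 Z \<Longrightarrow> reachable P T Wpre Wpost L M0"
proof (induction "\<Sum>t\<in>T. Z t" arbitrary: L Z rule: less_induct)
  case less
  show ?case
  proof (cases "\<forall>t\<in>T. Z t = 0")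
    case True
    then have "L = M0" using eqv_zero less.prems(3) by blast
    then show ?thesis using reachable_refl by simp
  next
    case False
    then obtain t where t: "t \<in> T" "0 < Z t" by auto
    from pass[OF cyc(1) less.prems(2,3)] obtain L2 Z2 where p:
      "reachable P T Wpre Wpost L L2" "reachable P T Wpre Wpost M0 L2" "eqv P T Wpre Wpost L2 M0 Z2"
      "(\<forall>t\<in>consumers P T Wpre. Z t = 0) \<longrightarrow>
        (\<forall>t. Z2 t \<le> Z t) \<and> (\<forall>t. t \<in> set \<sigma> \<longrightarrow> 0 < Z t \<longrightarrow> Z2 t < Z t)"
      by blast
    have le: "\<forall>x\<in>T. Z2 x \<le> Z x" and lt: "Z2 t < Z t" using p(4) less.prems(1) t cyc(2) by auto
    have "(\<Sum>x\<in>T. Z2 x) < (\<Sum>x\<in>T. Z x)" using sum_strict_mono_ex1[OF finT le] t lt by blast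
    moreover have "\<forall>t\<in>consumers P T Wpre. Z2 t = 0" using p(4) less.prems(1) by (metis le_zero_eq)
    ultimately have "reachable P T Wpre Wpost L2 M0" using less.hyps p(2,3) by blast
    then show ?thesis using p(1) reachable_trans by blast
  qed
qed

lemma phase1:
  assumes cyc: "fire_seq P T Wpre Wpost M0 \<sigma> = Some M0" "T \<subseteq> set \<sigma>"
  shows "reachable P T Wpre Wpost M0 L \<Longrightarrow>
    eqv P T Wpre Wpost L M0 Z \<Longrightarrow> reachable P T Wpre Wpost L M0"
proof (induction "\<Sum>t\<in>consumers P T Wpre. Z t" arbitrary: L Z rule: less_induct)
  case less
  let ?C = "consumers P T Wpre"
  have finC: "finite ?C" using finT unfolding consumers_def by simp
  show ?case
  proof (cases "\<forall>t\<in>?C. Z t = 0")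
    case True
    then show ?thesis using phase2[OF cyc True less.prems] by blast
  next
    case False
    then obtain t where t: "t \<in> ?C" "0 < Z t" by auto
    then have "t \<in> set \<sigma>" using cyc(2) unfolding consumers_def by auto
    from pass[OF cyc(1) less.prems(1,2)] obtain L2 Z2 where p:
      "reachable P T Wpre Wpost L L2" "reachable P T Wpre Wpost M0 L2" "eqv P T Wpre Wpost L2 M0 Z2"
      "\<forall>t\<in>?C. Z2 t \<le> Z t" "\<forall>t\<in>?C. t \<in> set \<sigma> \<longrightarrow> 0 < Z t \<longrightarrow> Z2 t < Z t"
      by blast
    have "(\<Sum>x\<in>?C. Z2 x) < (\<Sum>x\<in>?C. Z x)"
      using sum_strict_mono_ex1[OF finC p(4)] t p(5) \<open>t \<in> set \<sigma>\<close> by blast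
    then have "reachable P T Wpre Wpost L2 M0" using less.hyps p(2,3) by blast
    then show ?thesis using p(1) reachable_trans by blast
  qed
qed

lemma cover:
  assumes "S \<subseteq> T"
  shows "\<exists>\<sigma> M'. fire_seq P T Wpre Wpost M0 \<sigma> = Some M' \<and> S \<subseteq> set \<sigma>"
proof -
  have "finite S" using assms finT finite_subset by blast
  then show ?thesis using assms
  proof (induction S rule: finite_induct)
    case empty
    then show ?case by (intro exI[of _ "[]"]) auto
  next
    case (insert t S)
    then obtain \<sigma> M' where s: "fire_seq P T Wpre Wpost M0 \<sigma> = Some M'" "S \<subseteq> set \<sigma>" by auto
    have "reachable P T Wpre Wpost M0 M'" using s(1) unfolding reachable_def by blast
    then obtain M'' where "reachable P T Wpre Wpost M' M''" "enabled P Wpre M'' t"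
      using lv insert.prems unfolding live_def by blast
    then obtain \<xi> where xi: "fire_seq P T Wpre Wpost M' \<xi> = Some M''" unfolding reachable_def by blast
    have "fire_seq P T Wpre Wpost M0 (\<sigma> @ \<xi> @ [t]) = Some (fire P Wpre Wpost M'' t)"
      using s(1) xi insert.prems \<open>enabled P Wpre M'' t\<close>
      by (auto intro!: fire_seq_appendI)
    moreover have "insert t S \<subseteq> set (\<sigma> @ \<xi> @ [t])" using s(2) by auto
    ultimately show ?case by blast
  qed
qed

end

theorem mainTheorem9:
  fixes P :: "'p set" and T :: "'t set"
    and Wpre :: "'p \<Rightarrow> 't \<Rightarrow> nat" and Wpost :: "'t \<Rightarrow> 'p \<Rightarrow> nat"
    and M0 :: "'p \<Rightarrow> nat"
  assumes "petri_net P T"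
    and "H1S P T Wpre"
    and "live P T Wpre Wpost M0"
  shows "reversible P T Wpre Wpost M0 \<longleftrightarrow> enables_T_sequence P T Wpre Wpost M0"
proof
  have finP: "finite P" and finT: "finite T" using assms(1) unfolding petri_net_def by auto
  note ctx = finP finT assms(2,3)
  assume rev: "reversible P T Wpre Wpost M0"
  obtain \<sigma> M' where s: "fire_seq P T Wpre Wpost M0 \<sigma> = Some M'" "T \<subseteq> set \<sigma>"
    using cover[OF ctx, of T] by blast
  have "reachable P T Wpre Wpost M0 M'" using s(1) unfolding reachable_def by blast
  then obtain \<rho> where r: "fire_seq P T Wpre Wpost M' \<rho> = Some M0"
    using rev unfolding reversible_def reachable_def by blast
  have f: "fire_seq P T Wpre Wpost M0 (\<sigma> @ \<rho>) = Some M0" using s(1) r by (rule fire_seq_appendI)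
  have e: "eqv P T Wpre Wpost M0 M0 (count_list (\<sigma> @ \<rho>))" using fire_seq_eqv[OF finT f] by blast
  have "\<forall>p\<in>P. (\<Sum>t\<in>T. incidence Wpre Wpost p t * int (parikh (\<sigma> @ \<rho>) t)) = 0"
    using e unfolding eqv_def parikh_def by auto
  moreover have "T \<subseteq> set (\<sigma> @ \<rho>)" using s(2) by auto
  ultimately show "enables_T_sequence P T Wpre Wpost M0"
    unfolding enables_T_sequence_def T_sequence_def using f by blast
next
  have finP: "finite P" and finT: "finite T" using assms(1) unfolding petri_net_def by auto
  note ctx = finP finT assms(2,3)
  assume "enables_T_sequence P T Wpre Wpost M0"
  then obtain \<sigma> where ts: "T_sequence P T Wpre Wpost M0 \<sigma>" unfolding enables_T_sequence_def by blast
  then obtain M1 where f: "fire_seq P T Wpre Wpost M0 \<sigma> = Some M1" and cov: "T \<subseteq> set \<sigma>"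
    and z: "\<forall>p\<in>P. (\<Sum>t\<in>T. incidence Wpre Wpost p t * int (count_list \<sigma> t)) = 0"
    unfolding T_sequence_def parikh_def by auto
  have e: "eqv P T Wpre Wpost M1 M0 (count_list \<sigma>)" using fire_seq_eqv[OF finT f] by blast
  have "M1 = M0"
  proof
    fix p show "M1 p = M0 p"
      using e z unfolding eqv_def by (cases "p \<in> P") auto
  qed
  with f have cyc: "fire_seq P T Wpre Wpost M0 \<sigma> = Some M0" by simp
  show "reversible P T Wpre Wpost M0"
    unfolding reversible_def
  proof (intro allI impI)
    fix M assume rM: "reachable P T Wpre Wpost M0 M"
    then obtain \<tau> where "fire_seq P T Wpre Wpost M0 \<tau> = Some M" unfolding reachable_def by blast
    then have "eqv P T Wpre Wpost M M0 (count_list \<tau>)" using fire_seq_eqv[OF finT] by blast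
    then show "reachable P T Wpre Wpost M M0" using phase1[OF ctx cyc cov rM] by blast
  qed
qed

end
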